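(* In the standard variable-processor cup game on $n$ cups starting from all fills $0$, against a greedy emptier, the filler has a strategy that achieves a backlog of at least $\frac{n-1}{2}$ within at most $n^3$ rounds.
   Context: The (standard) variable-processor cup game on $n$ cups: real fills $x_1,\dots,x_n$; in each round the filler chooses an integer $1\le p\le n$ and reals $a_i\in[0,1]$ with $\sum_i a_i=p$ and adds $a_i$ to cup $i$; then the emptier chooses $p$ distinct cups and replaces each of their fills $x$ by $\max(0,x-1)$. The backlog is $\max_i x_i$. The greedy emptier empties from the $p$ fullest cups after the filler's move. *)

theory Defs
  imports Complex_Main
begin

text \<open>Variable-processor cup game on n cups, indexed 0..n-1. A state is a fill
  function x :: nat => real (only values at indices < n matter).\<close>

definition backlog :: "nat \<Rightarrow> (nat \<Rightarrow> real) \<Rightarrow> real" where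
  "backlog n x = Max (x ` {..<n})"

definition valid_fill :: "nat \<Rightarrow> nat \<Rightarrow> (nat \<Rightarrow> real) \<Rightarrow> bool" where
  "valid_fill n p a \<longleftrightarrow> 1 \<le> p \<and> p \<le> n \<and> (\<forall>i<n. 0 \<le> a i \<and> a i \<le> 1)
     \<and> (\<Sum>i<n. a i) = real p"

definition greedy_choice :: "nat \<Rightarrow> nat \<Rightarrow> (nat \<Rightarrow> real) \<Rightarrow> nat set \<Rightarrow> bool" where
  "greedy_choice n p y S \<longleftrightarrow> S \<subseteq> {..<n} \<and> card S = p
     \<and> (\<forall>i\<in>S. \<forall>j\<in>{..<n} - S. y j \<le> y i)"

definition empty_cups :: "nat set \<Rightarrow> (nat \<Rightarrow> real) \<Rightarrow> nat \<Rightarrow> real" where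
  "empty_cups S y = (\<lambda>i. if i \<in> S then max 0 (y i - 1) else y i)"

text \<open>filler_forces n B k x: from state x, the filler has a (adaptive) strategy
  guaranteeing that within at most k further rounds (including now) the backlog
  reaches at least B, against every greedy emptier.\<close>
fun filler_forces :: "nat \<Rightarrow> real \<Rightarrow> nat \<Rightarrow> (nat \<Rightarrow> real) \<Rightarrow> bool" where
  "filler_forces n B 0 x = (B \<le> backlog n x)"
| "filler_forces n B (Suc k) x =
     (B \<le> backlog n x \<or>
      (\<exists>p a. valid_fill n p a \<and>
         (\<forall>S. greedy_choice n p (\<lambda>i. x i + a i) S \<longrightarrow>
              filler_forces n B k (empty_cups S (\<lambda>i. x i + a i)))))"

end

theory Submission
  imports Defs
begin

definition Phi :: "nat \<Rightarrow> (nat \<Rightarrow> real) \<Rightarrow> real" where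
  "Phi n x = (\<Sum>m<n. (2 * x m)^2)"

definition hint :: "nat \<Rightarrow> (nat \<Rightarrow> real) \<Rightarrow> bool" where
  "hint n x \<longleftrightarrow> (\<forall>m<n. \<exists>L::nat. x m = real L / 2)"

lemma Phi_upd:
  assumes "s < n" "t < n" "s \<noteq> t"
  shows "Phi n (x(s := a, t := b)) = Phi n x - (2 * x s)^2 - (2 * x t)^2 + (2*a)^2 + (2*b)^2"
proof -
  have fin: "finite ({..<n} - {s,t})" by simp
  have split: "sum f {..<n} = f s + f t + sum f ({..<n} - {s,t})" for f :: "nat \<Rightarrow> real"
  proof -
    have "{..<n} = insert s (insert t ({..<n} - {s,t}))" using assms by auto
    then have "sum f {..<n} = sum f (insert s (insert t ({..<n} - {s,t})))" by simp
    also have "\<dots> = f s + f t + sum f ({..<n} - {s,t})" using assms by simp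
    finally show ?thesis .
  qed
  have eq: "(\<Sum>m\<in>{..<n} - {s,t}. (2 * (x(s := a, t := b)) m)^2) = (\<Sum>m\<in>{..<n} - {s,t}. (2 * x m)^2)"
    by (rule sum.cong) auto
  show ?thesis unfolding Phi_def
    using split[of "\<lambda>m. (2 * (x(s := a, t := b)) m)^2"] split[of "\<lambda>m. (2 * x m)^2"] eq assms
    by simp
qed

lemma below:
  assumes n: "n \<ge> 1" and hx: "hint n x" and nb: "\<not> (real n - 1)/2 \<le> backlog n x"
  shows "Phi n x < real n * (real n - 1)^2 \<and> (\<exists>i j. i<n \<and> j<n \<and> i\<noteq>j \<and> x i = x j)"
proof -
  have xm: "x m < (real n - 1)/2" if "m < n" for m
  proof -
    have "x m \<le> backlog n x" unfolding backlog_def using that by (intro Max_ge) auto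
    then show ?thesis using nb by linarith
  qed
  define lev where "lev m = (SOME L::nat. x m = real L / 2)" for m
  have lev: "x m = real (lev m) / 2" if "m < n" for m
    using hx that unfolding hint_def lev_def by (metis (mono_tags, lifting) someI_ex)
  have levlt: "lev m < n - 1" if "m < n" for m
  proof -
    have "real (lev m) < real n - 1" using xm[OF that] lev[OF that] by simp
    then show ?thesis using n by linarith
  qed
  have trm: "(2 * x m)^2 \<le> (real n - 1)^2 - 1" if "m < n" for m
  proof -
    have a: "real (lev m) + 1 \<le> real n - 1" using levlt[OF that] n by linarith
    have "2 * x m = real (lev m)" using lev[OF that] by simp
    then have "(2 * x m)^2 = real (lev m)^2" by simp
    also have "\<dots> \<le> (real n - 2)^2"
      using a by (intro power_mono) auto
    also have "\<dots> \<le> (real n - 1)^2 - 1" using a by (simp add: power2_eq_square algebra_simps)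
    finally show ?thesis .
  qed
  have "Phi n x \<le> real (card {..<n}) * ((real n - 1)^2 - 1)"
    unfolding Phi_def by (rule sum_bounded_above) (use trm in auto)
  then have p1: "Phi n x < real n * (real n - 1)^2" using n by (simp add: algebra_simps)
  have "\<not> inj_on lev {..<n}"
  proof
    assume "inj_on lev {..<n}"
    moreover have "lev ` {..<n} \<subseteq> {..<n-1}" using levlt by auto
    ultimately have "card {..<n} \<le> card {..<n-1}" by (intro card_inj_on_le) auto
    then show False using n by simp
  qed
  then obtain i j where "i<n" "j<n" "i\<noteq>j" "lev i = lev j" unfolding inj_on_def by auto
  then have "x i = x j" using lev[of i] lev[of j] by simp
  with p1 \<open>i<n\<close> \<open>j<n\<close> \<open>i\<noteq>j\<close> show ?thesis by blast
qed

lemma step: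
  assumes hx: "hint n x" and ij: "i<n" "j<n" "i\<noteq>j" "x i = x j"
  shows "\<exists>p a. valid_fill n p a \<and> (\<forall>S. greedy_choice n p (\<lambda>m. x m + a m) S \<longrightarrow>
     hint n (empty_cups S (\<lambda>m. x m + a m)) \<and> Phi n x + 1 \<le> Phi n (empty_cups S (\<lambda>m. x m + a m)))"
proof -
  define h where "h = x i"
  define F where "F = {m. m<n \<and> m\<noteq>i \<and> m\<noteq>j \<and> h \<le> x m}"
  define a where "a = (\<lambda>m. if m \<in> F then 1 else if m = i \<or> m = j then 1/2 else (0::real))"
  define p where "p = Suc (card F)"
  have Fsub: "F \<subseteq> {..<n} - {i,j}" unfolding F_def by auto
  have finF: "finite F" using Fsub finite_subset by blast
  have iF: "i \<notin> F" "j \<notin> F" using Fsub by blast+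
  have "card F \<le> card ({..<n} - {i,j})" using Fsub by (intro card_mono) auto
  also have "\<dots> = n - 2" using ij by (simp add: card_Diff_subset)
  finally have cardF: "card F \<le> n - 2" .
  have pn: "p \<le> n" using cardF ij unfolding p_def by linarith
  have suma: "(\<Sum>m<n. a m) = real p"
  proof -
    have "(\<Sum>m<n. a m) = sum a ({..<n} - F) + sum a F"
      using Fsub by (intro sum.subset_diff) auto
    also have "sum a ({..<n} - F) = sum a ({..<n} - F - {i,j}) + sum a {i,j}"
      using Fsub ij by (intro sum.subset_diff) auto
    finally have "(\<Sum>m<n. a m) = sum a F + (sum a {i,j} + sum a ({..<n} - F - {i,j}))" by simp
    also have "sum a F = card F" unfolding a_def by simp
    also have "sum a {i,j} = 1" using ij Fsub unfolding a_def by auto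
    also have "sum a ({..<n} - F - {i,j}) = 0" unfolding a_def by (intro sum.neutral) auto
    finally show ?thesis unfolding p_def by simp
  qed
  have vf: "valid_fill n p a" unfolding valid_fill_def using pn suma
    by (auto simp: p_def a_def)
  define y where "y = (\<lambda>m. x m + a m)"
  have xnn: "\<And>m. m < n \<Longrightarrow> 0 \<le> x m" using hx unfolding hint_def by fastforce
  have low: "x m \<le> h - 1/2" if mp: "m<n" "m \<notin> F" "m\<noteq>i" "m\<noteq>j" for m
  proof -
    obtain L where L: "x m = real L / 2" using hx mp(1) unfolding hint_def by blast
    obtain K where K: "h = real K / 2" using hx ij unfolding hint_def h_def by blast
    have "x m < h" using mp unfolding F_def by auto
    then have "L < K" using L K by simp
    then have "real L + 1 \<le> real K" by linarith
    then show ?thesis using L K by simp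
  qed
  have yF: "y m \<ge> h + 1" if "m \<in> F" for m using that unfolding y_def a_def F_def by auto
  have yi: "y i = h + 1/2" "y j = h + 1/2" unfolding y_def a_def h_def using Fsub ij by auto
  have ylow: "y m \<le> h - 1/2" if "m<n" "m \<notin> F" "m\<noteq>i" "m\<noteq>j" for m
    using low[OF that] that unfolding y_def a_def by simp
  have "hint n (empty_cups S y) \<and> Phi n x + 1 \<le> Phi n (empty_cups S y)"
    if gc: "greedy_choice n p y S" for S
  proof -
    have Sn: "S \<subseteq> {..<n}" and cS: "card S = p" and gr: "\<forall>s\<in>S. \<forall>t\<in>{..<n} - S. y t \<le> y s"
      using gc unfolding greedy_choice_def by auto
    have finS: "finite S" using Sn finite_subset by blast
    have FS: "F \<subseteq> S"
    proof
      fix f assume fF: "f \<in> F"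
      show "f \<in> S"
      proof (rule ccontr)
        assume fS: "f \<notin> S"
        have "f < n" using fF Fsub by auto
        have "S \<subseteq> F - {f}"
        proof
          fix s assume sS: "s \<in> S"
          have "y f \<le> y s" using gr sS fS \<open>f<n\<close> by auto
          moreover have "s \<in> F"
          proof (rule ccontr)
            assume "s \<notin> F"
            moreover have "s < n" using sS Sn by auto
            ultimately have "y s \<le> h + 1/2" using ylow[of s] yi by (cases "s = i \<or> s = j") auto
            then show False using yF[OF fF] \<open>y f \<le> y s\<close> by linarith
          qed
          ultimately show "s \<in> F - {f}" using fS sS by auto
        qed
        then have "card S \<le> card (F - {f})" using finF by (intro card_mono) auto
        also have "\<dots> < card F" using fF finF by (intro psubset_card_mono) auto
        finally show False using cS unfolding p_def by simp
      qed
    qed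
    have SF: "S \<subseteq> F \<union> {i,j}"
    proof
      fix w assume oS: "w \<in> S"
      show "w \<in> F \<union> {i,j}"
      proof (rule ccontr)
        assume on: "w \<notin> F \<union> {i,j}"
        have "w < n" using oS Sn by auto
        have yo: "y w \<le> h - 1/2" using ylow[of w] on \<open>w<n\<close> by auto
        have "i \<in> S"
        proof (rule ccontr)
          assume "i \<notin> S" then have "i \<in> {..<n} - S" using ij by simp
          then have "y i \<le> y w" using gr oS by blast
          then show False using yo yi by linarith
        qed
        moreover have "j \<in> S"
        proof (rule ccontr)
          assume "j \<notin> S" then have "j \<in> {..<n} - S" using ij by simp
          then have "y j \<le> y w" using gr oS by blast
          then show False using yo yi by linarith
        qed
        ultimately have "insert w (insert i (insert j F)) \<subseteq> S" using FS oS by auto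
        then have "card (insert w (insert i (insert j F))) \<le> card S" using finS by (intro card_mono) auto
        moreover have "card (insert w (insert i (insert j F))) = card F + 3"
          using on ij iF finF by simp
        ultimately show False using cS unfolding p_def by simp
      qed
    qed
    obtain s t where st: "{s,t} = {i,j}" "s \<noteq> t" "s \<in> S" "t \<notin> S" "S = insert s F"
    proof (cases "i \<in> S")
      case True
      have "j \<notin> S"
      proof
        assume "j \<in> S"
        then have "insert i (insert j F) \<subseteq> S" using True FS by blast
        then have "card (insert i (insert j F)) \<le> card S" using finS by (rule card_mono[rotated])
        moreover have "card (insert i (insert j F)) = card F + 2" using ij iF finF by simp
        ultimately show False using cS unfolding p_def by simp
      qed
      have "S = insert i F"
      proof (rule subset_antisym)
        show "S \<subseteq> insert i F" using SF \<open>j \<notin> S\<close> by blast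
        show "insert i F \<subseteq> S" using True FS by blast
      qed
      show ?thesis by (rule that[of i j]) (use True ij(3) \<open>j \<notin> S\<close> \<open>S = insert i F\<close> in simp_all)
    next
      case False
      have "j \<in> S"
      proof (rule ccontr)
        assume "j \<notin> S"
        then have "S \<subseteq> F" using SF False by blast
        then have "card S \<le> card F" using finF by (rule card_mono[rotated])
        then show False using cS unfolding p_def by simp
      qed
      have "S = insert j F"
      proof (rule subset_antisym)
        show "S \<subseteq> insert j F" using SF False by blast
        show "insert j F \<subseteq> S" using \<open>j \<in> S\<close> FS by blast
      qed
      show ?thesis by (rule that[of j i]) (use False ij(3) \<open>j \<in> S\<close> \<open>S = insert j F\<close> in \<open>simp_all add: insert_commute\<close>)
    qed
    have sn: "s < n" "t < n" "x s = h" "x t = h" using st ij unfolding h_def by auto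
    have "s \<in> {i,j}" "t \<in> {i,j}" using st(1) by (metis insertCI)+
    then have stF: "s \<notin> F" "t \<notin> F" using iF by auto
    have ys: "y s = h + 1/2" "y t = h + 1/2" using st yi by auto
    have z: "empty_cups S y = x(s := max 0 (h - 1/2), t := h + 1/2)"
    proof
      fix m
      show "empty_cups S y m = (x(s := max 0 (h - 1/2), t := h + 1/2)) m"
      proof (cases "m \<in> F")
        case True
        then have "x m \<ge> 0" using xnn Fsub by auto
        then show ?thesis using True st stF unfolding empty_cups_def y_def a_def by auto
      next
        case False
        then show ?thesis using st ys unfolding empty_cups_def
          by (auto simp: y_def a_def)
      qed
    qed
    have h0: "h \<ge> 0" using xnn ij unfolding h_def by auto
    obtain K where K: "h = real K / 2" using hx ij unfolding hint_def h_def by blast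
    have hz: "hint n (empty_cups S y)"
      unfolding hint_def z
    proof (intro allI impI)
      fix m assume "m < n"
      show "\<exists>L::nat. (x(s := max 0 (h - 1/2), t := h + 1/2)) m = real L / 2"
      proof (cases "m = t")
        case True then show ?thesis using K st by (intro exI[of _ "K+1"]) auto
      next
        case nt: False
        show ?thesis
        proof (cases "m = s")
          case True
          show ?thesis
          proof (cases "K = 0")
            case True then show ?thesis using K \<open>m = s\<close> nt by (intro exI[of _ 0]) auto
          next
            case False then show ?thesis using K \<open>m = s\<close> nt by (intro exI[of _ "K-1"]) (auto simp: of_nat_diff)
          qed
        next
          case False then show ?thesis using nt hx \<open>m<n\<close> unfolding hint_def by auto
        qed
      qed
    qed
    have "Phi n (empty_cups S y) = Phi n x - (2*h)^2 - (2*h)^2 + (2 * max 0 (h - 1/2))^2 + (2 * (h + 1/2))^2"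
      unfolding z by (simp only: Phi_upd[OF sn(1,2) st(2)] sn(3,4))
    moreover have "(2*h)^2 + (2*h)^2 + 1 \<le> (2 * max 0 (h - 1/2))^2 + (2 * (h + 1/2))^2"
    proof (cases "h \<ge> 1/2")
      case True then show ?thesis by (simp add: power2_eq_square algebra_simps)
    next
      case False
      then have "K = 0" using K by auto
      then show ?thesis using K by simp
    qed
    ultimately show ?thesis using hz by linarith
  qed
  then show ?thesis using vf unfolding y_def by blast
qed


lemma main:
  assumes n: "n \<ge> 1"
  shows "\<forall>x. hint n x \<longrightarrow> real n * (real n - 1)^2 \<le> real k + Phi n x
           \<longrightarrow> filler_forces n ((real n - 1) / 2) k x"
proof (induction k)
  case 0
  show ?case
  proof (intro allI impI)
    fix x assume hx: "hint n x" and b: "real n * (real n - 1)^2 \<le> real 0 + Phi n x"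
    show "filler_forces n ((real n - 1) / 2) 0 x"
    proof (rule ccontr)
      assume "\<not> filler_forces n ((real n - 1) / 2) 0 x"
      then have "\<not> (real n - 1)/2 \<le> backlog n x" by simp
      then show False using below[OF n hx] b by simp
    qed
  qed
next
  case (Suc k)
  show ?case
  proof (intro allI impI)
    fix x assume hx: "hint n x" and b: "real n * (real n - 1)^2 \<le> real (Suc k) + Phi n x"
    show "filler_forces n ((real n - 1) / 2) (Suc k) x"
    proof (cases "(real n - 1)/2 \<le> backlog n x")
      case True then show ?thesis by simp
    next
      case False
      then obtain i j where ij: "i<n" "j<n" "i\<noteq>j" "x i = x j" using below[OF n hx] by blast
      obtain p a where pa: "valid_fill n p a" and
        hs: "\<forall>S. greedy_choice n p (\<lambda>m. x m + a m) S \<longrightarrow>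
           hint n (empty_cups S (\<lambda>m. x m + a m)) \<and> Phi n x + 1 \<le> Phi n (empty_cups S (\<lambda>m. x m + a m))"
        using step[OF hx ij] by blast
      have "\<forall>S. greedy_choice n p (\<lambda>i. x i + a i) S \<longrightarrow>
              filler_forces n ((real n - 1) / 2) k (empty_cups S (\<lambda>i. x i + a i))"
      proof (intro allI impI)
        fix S assume "greedy_choice n p (\<lambda>i. x i + a i) S"
        then have h1: "hint n (empty_cups S (\<lambda>m. x m + a m))"
          and h2: "Phi n x + 1 \<le> Phi n (empty_cups S (\<lambda>m. x m + a m))" using hs by auto
        have "real n * (real n - 1)^2 \<le> real k + Phi n (empty_cups S (\<lambda>m. x m + a m))"
          using b h2 by simp
        then show "filler_forces n ((real n - 1) / 2) k (empty_cups S (\<lambda>i. x i + a i))"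
          using Suc.IH h1 by blast
      qed
      then show ?thesis using pa by auto
    qed
  qed
qed

theorem theorem5p2:
  fixes n :: nat
  assumes "n \<ge> 1"
  shows "filler_forces n ((real n - 1) / 2) (n ^ 3) (\<lambda>_. 0)"
proof -
  have h: "hint n (\<lambda>_. 0)" unfolding hint_def by (auto intro: exI[of _ 0])
  have "real n * (real n - 1)^2 \<le> real n * (real n)^2"
    using assms by (intro mult_left_mono power_mono) auto
  also have "\<dots> = real (n^3) + Phi n (\<lambda>_. 0)" unfolding Phi_def by (simp add: power2_eq_square power3_eq_cube)
  finally show ?thesis using main[OF assms, of "n^3"] h by blast
qed

end
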